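(* Let $G$ be a graph with a linear order $<$ on $V(G)$ satisfying the X-property, let $s<t$ be vertices with $d^*:=\operatorname{dist}(s,t)<\infty$, and let $P=p_0,p_1,\dots,p_{d^*}$ (with $p_0=s$, $p_{d^*}=t$) be a shortest $s$-$t$ path. Then $\operatorname{righti}(P)<\operatorname{lefti}(P)$ holds if and only if $P$ contains a pair of crossing edges. Moreover, if $P$ contains a pair of crossing edges, then $\operatorname{righti}(P)=\operatorname{lefti}(P)-1$ and $p_i<p_j$ for all indices $i<\operatorname{righti}(P)<\operatorname{lefti}(P)<j$.
   Context: The X-property: for all vertices $p<q<r<s$, if $\{p,r\}\in E(G)$ and $\{q,s\}\in E(G)$ then $\{p,s\}\in E(G)$. $\operatorname{dist}$ is the number of edges of a shortest path. $\operatorname{lefti}(P)$ is the index $i$ such that $p_i$ is the leftmost (w.r.t. $<$) vertex of $P$, and $\operatorname{righti}(P)$ the index of the rightmost vertex of $P$. Two edges $\{a,b\}$, $\{c,d\}$ with $a<b$, $c<d$ are crossing if $a<c<b<d$ or $c<a<d<b$. *)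

theory Defs
  imports Main
begin

definition graph :: "'a set \<Rightarrow> 'a set set \<Rightarrow> bool" where
  "graph V E \<longleftrightarrow> (\<forall>e\<in>E. \<exists>u v. e = {u, v} \<and> u \<noteq> v \<and> u \<in> V \<and> v \<in> V)"

definition x_property :: "('a::linorder) set \<Rightarrow> 'a set set \<Rightarrow> bool" where
  "x_property V E \<longleftrightarrow> (\<forall>p\<in>V. \<forall>q\<in>V. \<forall>r\<in>V. \<forall>s\<in>V.
      p < q \<and> q < r \<and> r < s \<and> {p, r} \<in> E \<and> {q, s} \<in> E \<longrightarrow> {p, s} \<in> E)"

definition is_walk :: "'a set \<Rightarrow> 'a set set \<Rightarrow> 'a list \<Rightarrow> bool" where
  "is_walk V E ps \<longleftrightarrow> ps \<noteq> [] \<and> set ps \<subseteq> V \<and>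
     (\<forall>i. Suc i < length ps \<longrightarrow> {ps ! i, ps ! Suc i} \<in> E)"

definition walk_between :: "'a set \<Rightarrow> 'a set set \<Rightarrow> 'a \<Rightarrow> 'a \<Rightarrow> 'a list \<Rightarrow> bool" where
  "walk_between V E s t ps \<longleftrightarrow> is_walk V E ps \<and> hd ps = s \<and> last ps = t"

definition dist_finite :: "'a set \<Rightarrow> 'a set set \<Rightarrow> 'a \<Rightarrow> 'a \<Rightarrow> bool" where
  "dist_finite V E s t \<longleftrightarrow> (\<exists>ps. walk_between V E s t ps)"

definition dist :: "'a set \<Rightarrow> 'a set set \<Rightarrow> 'a \<Rightarrow> 'a \<Rightarrow> nat" where
  "dist V E s t = (LEAST n. \<exists>ps. walk_between V E s t ps \<and> length ps = Suc n)"

definition shortest_path :: "'a set \<Rightarrow> 'a set set \<Rightarrow> 'a \<Rightarrow> 'a \<Rightarrow> 'a list \<Rightarrow> bool" where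
  "shortest_path V E s t ps \<longleftrightarrow> walk_between V E s t ps \<and> length ps = Suc (dist V E s t)"

definition lefti :: "('a::linorder) list \<Rightarrow> nat" where
  "lefti ps = (THE i. i < length ps \<and> ps ! i = Min (set ps))"

definition righti :: "('a::linorder) list \<Rightarrow> nat" where
  "righti ps = (THE i. i < length ps \<and> ps ! i = Max (set ps))"

definition crossing :: "('a::linorder) \<Rightarrow> 'a \<Rightarrow> 'a \<Rightarrow> 'a \<Rightarrow> bool" where
  "crossing a b c d \<longleftrightarrow> a < c \<and> c < b \<and> b < d \<or> c < a \<and> a < d \<and> d < b"

definition path_has_crossing :: "('a::linorder) list \<Rightarrow> bool" where
  "path_has_crossing ps \<longleftrightarrow> (\<exists>i j. Suc i < length ps \<and> Suc j < length ps \<and>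
     crossing (min (ps!i) (ps!Suc i)) (max (ps!i) (ps!Suc i))
              (min (ps!j) (ps!Suc j)) (max (ps!j) (ps!Suc j)))"

end

theory Submission
  imports Defs
begin


lemma ivt_bool:
  fixes Q :: "nat \<Rightarrow> bool"
  shows "lo \<le> hi \<Longrightarrow> Q lo \<noteq> Q hi \<Longrightarrow> \<exists>k. lo \<le> k \<and> k < hi \<and> Q k \<noteq> Q (Suc k)"
proof (induction hi)
  case 0 then show ?case by auto
next
  case (Suc hi)
  show ?case
  proof (cases "lo = Suc hi")
    case True then show ?thesis using Suc by auto
  next
    case False
    then have "lo \<le> hi" using Suc by auto
    show ?thesis
    proof (cases "Q hi = Q (Suc hi)")
      case True
      then obtain k where "lo \<le> k \<and> k < hi \<and> Q k \<noteq> Q (Suc k)" using Suc \<open>lo \<le> hi\<close> by auto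
      then show ?thesis by (intro exI[of _ k]) auto
    next
      case False
      then show ?thesis using \<open>lo \<le> hi\<close> by (intro exI[of _ hi]) auto
    qed
  qed
qed

lemma crossing_sym: "crossing a b c d = crossing c d a b"
  unfolding crossing_def by auto

lemma cross_intro:
  fixes u v w z :: "'a::linorder"
  assumes "u \<noteq> v" "w \<noteq> u" "w \<noteq> v" "z \<noteq> u" "z \<noteq> v"
    "(min u v < w \<and> w < max u v) \<noteq> (min u v < z \<and> z < max u v)"
  shows "crossing (min w z) (max w z) (min u v) (max u v)"
  using assms unfolding crossing_def min_def max_def
  by (auto split: if_splits)

lemma cross_pat:
  fixes u v w z :: "'a::linorder"
  assumes "crossing (min u v) (max u v) (min w z) (max w z)"
    "\<forall>q\<in>{u,v,w,z}. min v w \<le> q \<and> q \<le> max v w"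
  shows "(w < u \<and> u < z \<and> z < v) \<or> (v < z \<and> z < u \<and> u < w)"
  using assms unfolding crossing_def min_def max_def
  by (auto split: if_splits)

lemma cr_X:
  fixes u v w z :: "'a::linorder"
  assumes c: "crossing (min u v) (max u v) (min w z) (max w z)"
  and xp: "x_property V E" and V: "u \<in> V" "v \<in> V" "w \<in> V" "z \<in> V"
  and e: "{u,v}\<in>E" "{w,z}\<in>E"
  shows "u\<noteq>v \<and> u\<noteq>w \<and> u\<noteq>z \<and> v\<noteq>w \<and> v\<noteq>z \<and> w\<noteq>z \<and>
    (\<exists>x y. x\<in>{u,v} \<and> y\<in>{w,z} \<and> {x,y}\<in>E \<and> (\<forall>q\<in>{u,v,w,z}. min x y \<le> q \<and> q \<le> max x y))"
proof -
  define a where "a = min u v"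
  define b where "b = max u v"
  define cc where "cc = min w z"
  define d where "d = max w z"
  have ab: "{a,b} = {u,v}" "a \<in> {u,v}" "b \<in> {u,v}" unfolding a_def b_def min_def max_def by auto
  have cd: "{cc,d} = {w,z}" "cc \<in> {w,z}" "d \<in> {w,z}" unfolding cc_def d_def min_def max_def by auto
  have dist: "u\<noteq>v \<and> u\<noteq>w \<and> u\<noteq>z \<and> v\<noteq>w \<and> v\<noteq>z \<and> w\<noteq>z"
    using c unfolding crossing_def min_def max_def by (auto split: if_splits)
  have aV: "a \<in> V" "b \<in> V" "cc \<in> V" "d \<in> V" using ab cd V by auto
  have eab: "{a,b} \<in> E" "{cc,d} \<in> E" using ab cd e by auto
  have rng: "a \<le> u" "a \<le> v" "u \<le> b" "v \<le> b" "cc \<le> w" "cc \<le> z" "w \<le> d" "z \<le> d"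
    unfolding a_def b_def cc_def d_def by auto
  from c have "a < cc \<and> cc < b \<and> b < d \<or> cc < a \<and> a < d \<and> d < b"
    unfolding crossing_def a_def b_def cc_def d_def .
  then show ?thesis
  proof
    assume h: "a < cc \<and> cc < b \<and> b < d"
    then have "{a,d} \<in> E" using xp aV eab unfolding x_property_def by blast
    moreover have "\<forall>q\<in>{u,v,w,z}. min a d \<le> q \<and> q \<le> max a d"
      using h rng by (auto simp: min_def max_def)
    ultimately show ?thesis using dist ab cd by blast
  next
    assume h: "cc < a \<and> a < d \<and> d < b"
    then have "{cc,b} \<in> E" using xp aV eab unfolding x_property_def by blast
    then have "{b,cc} \<in> E" by (simp add: insert_commute)
    moreover have "\<forall>q\<in>{u,v,w,z}. min b cc \<le> q \<and> q \<le> max b cc"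
      using h rng by (auto simp: min_def max_def)
    ultimately show ?thesis using dist ab cd by blast
  qed
qed



locale spath =
  fixes V :: "('a::linorder) set" and E :: "'a set set" and ps :: "'a list"
  assumes xp: "x_property V E" and sub: "set ps \<subseteq> V" and dst: "distinct ps"
  and edges: "\<And>i. Suc i < length ps \<Longrightarrow> {ps!i, ps!Suc i} \<in> E"
  and adj: "\<And>x y. x < length ps \<Longrightarrow> y < length ps \<Longrightarrow> {ps!x, ps!y} \<in> E \<Longrightarrow> x = Suc y \<or> y = Suc x"
begin

definition cr :: "nat \<Rightarrow> nat \<Rightarrow> bool" where
  "cr i j = crossing (min (ps!i) (ps!Suc i)) (max (ps!i) (ps!Suc i))
              (min (ps!j) (ps!Suc j)) (max (ps!j) (ps!Suc j))"

definition dn :: "nat \<Rightarrow> bool" where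
  "dn i = (ps!(Suc(Suc i)) < ps!i \<and> ps!i < ps!(Suc(Suc(Suc i))) \<and> ps!(Suc(Suc(Suc i))) < ps!(Suc i))"

definition up :: "nat \<Rightarrow> bool" where
  "up i = (ps!(Suc i) < ps!(Suc(Suc(Suc i))) \<and> ps!(Suc(Suc(Suc i))) < ps!i \<and> ps!i < ps!(Suc(Suc i)))"

definition inside :: "nat \<Rightarrow> 'a \<Rightarrow> bool" where
  "inside j x = (min (ps!j) (ps!Suc j) < x \<and> x < max (ps!j) (ps!Suc j))"

lemma cr_sym: "cr i j = cr j i"
  unfolding cr_def using crossing_sym by blast

lemma neq: "i < length ps \<Longrightarrow> j < length ps \<Longrightarrow> i \<noteq> j \<Longrightarrow> ps!i \<noteq> ps!j"
  using dst nth_eq_iff_index_eq by blast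

lemma G:
  assumes c: "cr i j" and ij: "i \<le> j" and jl: "Suc j < length ps"
  shows "j = Suc (Suc i) \<and> (dn i \<or> up i)"
proof -
  have il: "Suc i < length ps" using ij jl by auto
  let ?u = "ps!i" and ?v = "ps!Suc i" and ?w = "ps!j" and ?z = "ps!Suc j"
  have V: "?u \<in> V" "?v \<in> V" "?w \<in> V" "?z \<in> V" using sub il jl by auto
  have X: "?u\<noteq>?v \<and> ?u\<noteq>?w \<and> ?u\<noteq>?z \<and> ?v\<noteq>?w \<and> ?v\<noteq>?z \<and> ?w\<noteq>?z \<and>
    (\<exists>x y. x\<in>{?u,?v} \<and> y\<in>{?w,?z} \<and> {x,y}\<in>E \<and> (\<forall>q\<in>{?u,?v,?w,?z}. min x y \<le> q \<and> q \<le> max x y))"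
    using cr_X[OF c[unfolded cr_def] xp V edges[OF il] edges[OF jl]] .
  then obtain x y where xy: "x\<in>{?u,?v}" "y\<in>{?w,?z}" "{x,y}\<in>E"
    "\<forall>q\<in>{?u,?v,?w,?z}. min x y \<le> q \<and> q \<le> max x y" by blast
  have d: "i \<noteq> j" "Suc i \<noteq> j" using X by auto
  have jj: "j = Suc (Suc i)" and xv: "x = ?v" and yw: "y = ?w"
  proof -
    have "(x = ?u \<or> x = ?v) \<and> (y = ?w \<or> y = ?z)" using xy by auto
    then have "j = Suc (Suc i) \<and> x = ?v \<and> y = ?w"
    proof (elim conjE disjE)
      assume "x = ?u" "y = ?w" then show ?thesis using adj[of i j] xy il jl ij d by auto
    next
      assume "x = ?u" "y = ?z" then show ?thesis using adj[of i "Suc j"] xy il jl ij d by auto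
    next
      assume "x = ?v" "y = ?w" then show ?thesis using adj[of "Suc i" j] xy il jl ij d by auto
    next
      assume "x = ?v" "y = ?z" then show ?thesis using adj[of "Suc i" "Suc j"] xy il jl ij d by auto
    qed
    then show "j = Suc (Suc i)" "x = ?v" "y = ?w" by auto
  qed
  have "(?w < ?u \<and> ?u < ?z \<and> ?z < ?v) \<or> (?v < ?z \<and> ?z < ?u \<and> ?u < ?w)"
    using cross_pat[OF c[unfolded cr_def]] xy(4) xv yw by blast
  then show ?thesis using jj unfolding dn_def up_def by auto
qed

lemma sep:
  assumes jl: "Suc j < length ps" and lh: "lo \<le> hi" "hi < length ps"
    and av: "\<forall>k. lo \<le> k \<and> k \<le> hi \<longrightarrow> k \<noteq> j \<and> k \<noteq> Suc j"
    and ne: "inside j (ps!lo) \<noteq> inside j (ps!hi)"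
  shows "\<exists>m. lo \<le> m \<and> m < hi \<and> cr m j"
proof -
  obtain m where m: "lo \<le> m" "m < hi" "inside j (ps!m) \<noteq> inside j (ps!Suc m)"
    using ivt_bool[of lo hi "\<lambda>k. inside j (ps!k)"] lh ne by auto
  have "cr m j"
    unfolding cr_def
    apply (rule cross_intro)
    using neq[of j "Suc j"] neq[of m j] neq[of m "Suc j"] neq[of "Suc m" j] neq[of "Suc m" "Suc j"]
      jl m lh av[rule_format, of m] av[rule_format, of "Suc m"] unfolding inside_def
    by auto
  then show ?thesis using m by auto
qed

lemma down:
  assumes il: "Suc(Suc(Suc i)) < length ps" and dn: "dn i"
  shows "(\<forall>k<length ps. k \<noteq> Suc i \<longrightarrow> ps!k < ps!Suc i)
    \<and> (\<forall>k<length ps. k \<noteq> Suc(Suc i) \<longrightarrow> ps!Suc(Suc i) < ps!k)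
    \<and> (\<forall>j k. j \<le> i \<longrightarrow> Suc(Suc(Suc i)) \<le> k \<longrightarrow> k < length ps \<longrightarrow> ps!j < ps!k)"
proof -
  define a where "a = ps!Suc(Suc i)"
  define b where "b = ps!i"
  define c where "c = ps!Suc(Suc(Suc i))"
  define d where "d = ps!Suc i"
  have o: "a < b" "b < c" "c < d" using dn unfolding dn_def a_def b_def c_def d_def by auto
  have ins1: "inside (Suc i) x = (a < x \<and> x < d)" for x
    unfolding inside_def a_def[symmetric] d_def[symmetric] using o by auto
  have ins2: "inside (Suc (Suc i)) x = (a < x \<and> x < c)" for x
    unfolding inside_def a_def[symmetric] c_def[symmetric] using o by auto
  have ins0: "inside i x = (b < x \<and> x < d)" for x
    unfolding inside_def b_def[symmetric] d_def[symmetric] using o by auto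
  have A: "a < ps!k \<and> ps!k < d" if kk: "k \<le> i" for k
  proof (rule ccontr)
    assume h: "\<not> (a < ps!k \<and> ps!k < d)"
    obtain m where m: "k \<le> m" "m < i" "cr m (Suc i)"
    proof -
      have "inside (Suc i) (ps!k) \<noteq> inside (Suc i) (ps!i)" using h o unfolding ins1 b_def[symmetric] by auto
      moreover have "\<forall>q. k \<le> q \<and> q \<le> i \<longrightarrow> q \<noteq> Suc i \<and> q \<noteq> Suc (Suc i)" by auto
      moreover have "Suc (Suc i) < length ps" "k \<le> i" "i < length ps" using il kk by auto
      ultimately show ?thesis using sep[of "Suc i" k i] that by blast
    qed
    then have "Suc i = Suc (Suc m) \<and> (dn m \<or> up m)" using G[of m "Suc i"] il by auto
    then have "i = Suc m" "dn m \<or> up m" by auto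
    then show False using o unfolding dn_def up_def a_def b_def c_def d_def by auto
  qed
  have B: "a < ps!k \<and> ps!k < d" if kk: "Suc(Suc(Suc i)) \<le> k" "k < length ps" for k
  proof (rule ccontr)
    assume h: "\<not> (a < ps!k \<and> ps!k < d)"
    obtain m where m: "Suc(Suc(Suc i)) \<le> m" "m < k" "cr m (Suc i)"
    proof -
      have "inside (Suc i) (ps!Suc(Suc(Suc i))) \<noteq> inside (Suc i) (ps!k)" using h o unfolding ins1 c_def[symmetric] by auto
      moreover have "\<forall>q. Suc(Suc(Suc i)) \<le> q \<and> q \<le> k \<longrightarrow> q \<noteq> Suc i \<and> q \<noteq> Suc (Suc i)" by auto
      moreover have "Suc (Suc i) < length ps" "Suc(Suc(Suc i)) \<le> k" "k < length ps" using il kk by auto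
      ultimately show ?thesis using sep[of "Suc i" "Suc(Suc(Suc i))" k] that by blast
    qed
    then have "cr (Suc i) m" using cr_sym by blast
    then have "m = Suc (Suc (Suc i)) \<and> (dn (Suc i) \<or> up (Suc i))" using G[of "Suc i" m] m kk by auto
    then show False using o unfolding dn_def up_def a_def b_def c_def d_def by auto
  qed
  have C: "ps!k < c" if kk: "k \<le> i" for k
  proof (rule ccontr)
    assume h: "\<not> ps!k < c"
    obtain m where m: "k \<le> m" "m < i" "cr m (Suc (Suc i))"
    proof -
      have "inside (Suc (Suc i)) (ps!k) \<noteq> inside (Suc (Suc i)) (ps!i)" using h o unfolding ins2 b_def[symmetric] by auto
      moreover have "\<forall>q. k \<le> q \<and> q \<le> i \<longrightarrow> q \<noteq> Suc (Suc i) \<and> q \<noteq> Suc (Suc (Suc i))" by auto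
      moreover have "Suc (Suc (Suc i)) < length ps" "k \<le> i" "i < length ps" using il kk by auto
      ultimately show ?thesis using sep[of "Suc (Suc i)" k i] that by blast
    qed
    then show False using G[of m "Suc (Suc i)"] il by auto
  qed
  have D: "b < ps!k" if kk: "Suc(Suc(Suc i)) \<le> k" "k < length ps" for k
  proof (rule ccontr)
    assume h: "\<not> b < ps!k"
    obtain m where m: "Suc(Suc(Suc i)) \<le> m" "m < k" "cr m i"
    proof -
      have "inside i (ps!Suc(Suc(Suc i))) \<noteq> inside i (ps!k)" using h o unfolding ins0 c_def[symmetric] by auto
      moreover have "\<forall>q. Suc(Suc(Suc i)) \<le> q \<and> q \<le> k \<longrightarrow> q \<noteq> i \<and> q \<noteq> Suc i" by auto
      moreover have "Suc i < length ps" "Suc(Suc(Suc i)) \<le> k" "k < length ps" using il kk by auto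
      ultimately show ?thesis using sep[of i "Suc(Suc(Suc i))" k] that by blast
    qed
    then have "cr i m" using cr_sym by blast
    then show False using G[of i m] m kk by auto
  qed
  have Eo: "ps!j < ps!k" if kk: "j \<le> i" "Suc(Suc(Suc i)) \<le> k" "k < length ps" for j k
  proof (rule ccontr)
    assume "\<not> ps!j < ps!k"
    then have h: "ps!k < ps!j" using neq[of j k] kk by auto
    define y where "y = ps!k"
    have "b < y" using D kk y_def by auto
    obtain m where m: "j \<le> m" "m < i" "(ps!m < y) \<noteq> (ps!Suc m < y)"
    proof -
      have "(ps!j < y) \<noteq> (ps!i < y)" using h \<open>b < y\<close> unfolding y_def b_def by auto
      then show ?thesis using ivt_bool[of j i "\<lambda>q. ps!q < y"] kk that by blast
    qed
    have "ps!m \<noteq> y" "ps!Suc m \<noteq> y" using neq[of m k] neq[of "Suc m" k] m kk il y_def by auto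
    then have iy: "inside m y" using m unfolding inside_def by (auto simp: min_def max_def)
    have "ps!m < c" "ps!Suc m < c" using C m by auto
    then have ic: "\<not> inside m c" unfolding inside_def by (auto simp: max_def)
    obtain m' where m': "Suc(Suc(Suc i)) \<le> m'" "m' < k" "cr m' m"
    proof -
      have "inside m (ps!Suc(Suc(Suc i))) \<noteq> inside m (ps!k)" using iy ic unfolding y_def c_def by auto
      moreover have "\<forall>q. Suc(Suc(Suc i)) \<le> q \<and> q \<le> k \<longrightarrow> q \<noteq> m \<and> q \<noteq> Suc m" using m by auto
      moreover have "Suc m < length ps" using m il by auto
      moreover have "Suc(Suc(Suc i)) \<le> k" "k < length ps" using kk by auto
      ultimately show ?thesis using sep[of m "Suc(Suc(Suc i))" k] that by blast
    qed
    then have "cr m m'" using cr_sym by blast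
    then show False using G[of m m'] m m' kk by auto
  qed
  have M1: "ps!k < d" if kk: "k < length ps" "k \<noteq> Suc i" for k
  proof -
    consider "k \<le> i" | "k = Suc (Suc i)" | "Suc(Suc(Suc i)) \<le> k" using kk by linarith
    then show ?thesis using A B kk o unfolding a_def by cases auto
  qed
  have M2: "a < ps!k" if kk: "k < length ps" "k \<noteq> Suc (Suc i)" for k
  proof -
    consider "k \<le> i" | "k = Suc i" | "Suc(Suc(Suc i)) \<le> k" using kk by linarith
    then show ?thesis using A B kk o unfolding d_def by cases auto
  qed
  show ?thesis using M1 M2 Eo unfolding a_def d_def by blast
qed

end

lemma spath_rev: "spath V E ps \<Longrightarrow> spath V E (rev ps)"
proof -
  assume s: "spath V E ps"
  interpret spath V E ps by (rule s)
  show ?thesis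
  proof
    show "x_property V E" by (rule xp)
    show "set (rev ps) \<subseteq> V" using sub by simp
    show "distinct (rev ps)" using dst by simp
  next
    fix i assume "Suc i < length (rev ps)"
    then show "{rev ps ! i, rev ps ! Suc i} \<in> E"
      using edges[of "length ps - Suc (Suc i)"] by (auto simp: rev_nth insert_commute Suc_diff_Suc)
  next
    fix x y assume h: "x < length (rev ps)" "y < length (rev ps)" "{rev ps ! x, rev ps ! y} \<in> E"
    then have "length ps - Suc x = Suc (length ps - Suc y) \<or> length ps - Suc y = Suc (length ps - Suc x)"
      using adj[of "length ps - Suc x" "length ps - Suc y"] by (auto simp: rev_nth)
    then show "x = Suc y \<or> y = Suc x" using h by auto
  qed
qed



lemma walk_take: "is_walk V E ps \<Longrightarrow> k < length ps \<Longrightarrow> is_walk V E (take (Suc k) ps)"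
  unfolding is_walk_def by (auto dest: in_set_takeD)

lemma walk_splice:
  assumes w: "is_walk V E ps" and ij: "i < j" "j < length ps" and e: "{ps!i, ps!j} \<in> E"
  shows "is_walk V E (take (Suc i) ps @ drop j ps)"
proof -
  have L: "length (take (Suc i) ps) = Suc i" using ij by auto
  show ?thesis unfolding is_walk_def
  proof (intro conjI allI impI)
    show "take (Suc i) ps @ drop j ps \<noteq> []" using ij by auto
    show "set (take (Suc i) ps @ drop j ps) \<subseteq> V" using w unfolding is_walk_def
      by (auto dest: in_set_takeD in_set_dropD)
  next
    fix q assume q: "Suc q < length (take (Suc i) ps @ drop j ps)"
    consider "q < i" | "q = i" | "i < q" by linarith
    then show "{(take (Suc i) ps @ drop j ps) ! q, (take (Suc i) ps @ drop j ps) ! Suc q} \<in> E"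
    proof cases
      case 1 then show ?thesis using w ij unfolding is_walk_def by (auto simp: nth_append)
    next
      case 2 then show ?thesis using e ij by (auto simp: nth_append)
    next
      case 3
      have "Suc (q - Suc i + j) < length ps" using q 3 ij by auto
      moreover have "Suc q - Suc i = Suc (q - Suc i)" using 3 by auto
      ultimately show ?thesis using w ij 3 unfolding is_walk_def by (auto simp: nth_append)
    qed
  qed
qed


lemma sp_spath:
  assumes g: "graph V E" and xp: "x_property V E" and sp: "shortest_path V E s t P"
  shows "spath V E P"
proof -
  have wb: "walk_between V E s t P" and len: "length P = Suc (dist V E s t)"
    using sp unfolding shortest_path_def by auto
  have w: "is_walk V E P" and hd: "hd P = s" and lst: "last P = t" using wb unfolding walk_between_def by auto
  have ne: "P \<noteq> []" using w unfolding is_walk_def by auto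
  have mn: "length P \<le> length q" if "walk_between V E s t q" for q
  proof -
    have "q \<noteq> []" using that unfolding walk_between_def is_walk_def by auto
    then have "length q = Suc (length q - 1)" by auto
    then have "dist V E s t \<le> length q - 1" unfolding dist_def
      using that by (intro Least_le) metis
    then show ?thesis using len \<open>length q = Suc (length q - 1)\<close> by linarith
  qed
  have splice_short: False if "i < j" "Suc i < j" "j < length P" "{P!i, P!j} \<in> E" for i j
  proof -
    let ?q = "take (Suc i) P @ drop j P"
    have "is_walk V E ?q" using walk_splice[OF w] that by auto
    moreover have "hd ?q = s" using hd ne by auto
    moreover have "last ?q = t" using lst that by (auto simp: last_append)
    ultimately have "length P \<le> length ?q" using mn unfolding walk_between_def by blast
    then show False using that by auto
  qed
  have adj: "x = Suc y \<or> y = Suc x" if h: "x < length P" "y < length P" "{P!x, P!y} \<in> E" for x y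
  proof -
    have "x \<noteq> y"
    proof
      assume "x = y"
      then have "{P!x} \<in> E" using h by auto
      then obtain u v where uv: "{P!x} = {u,v}" "u \<noteq> v" using g unfolding graph_def by blast
      have "u \<in> {P!x}" "v \<in> {P!x}" unfolding uv(1) by auto
      then show False using uv(2) by auto
    qed
    moreover have "\<not> (Suc x < y)" using splice_short[of x y] h by auto
    moreover have "\<not> (Suc y < x)" using splice_short[of y x] h by (auto simp: insert_commute)
    ultimately show ?thesis by linarith
  qed
  have dst: "distinct P"
  proof (rule ccontr)
    assume "\<not> distinct P"
    then obtain x y where xy: "x < y" "y < length P" "P!x = P!y"
      by (metis distinct_conv_nth linorder_neqE_nat)
    show False
    proof (cases "Suc y < length P")
      case True
      then have "{P!x, P!Suc y} \<in> E" using w xy unfolding is_walk_def by auto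
      then show False using adj[of x "Suc y"] True xy by auto
    next
      case False
      then have yl: "y = length P - 1" using xy by auto
      let ?q = "take (Suc x) P"
      have "is_walk V E ?q" using walk_take[OF w] xy by auto
      moreover have "hd ?q = s" using hd ne by auto
      moreover have "last ?q = t" using lst xy yl ne
        by (simp add: last_conv_nth take_Suc_conv_app_nth)
      ultimately have "length P \<le> length ?q" using mn unfolding walk_between_def by blast
      then show False using xy by auto
    qed
  qed
  show ?thesis
  proof
    show "x_property V E" by (rule xp)
    show "set P \<subseteq> V" using w unfolding is_walk_def by auto
    show "distinct P" by (rule dst)
    show "{P!i, P!Suc i} \<in> E" if "Suc i < length P" for i using w that unfolding is_walk_def by auto
    show "x = Suc y \<or> y = Suc x" if "x < length P" "y < length P" "{P!x, P!y} \<in> E" for x y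
      using adj that by blast
  qed
qed



lemma ri_eq: "distinct ps \<Longrightarrow> i < length ps \<Longrightarrow> ps!i = Max (set ps) \<Longrightarrow> righti ps = i"
  unfolding righti_def
proof (rule the_equality)
  assume "distinct ps" "i < length ps" "ps!i = Max (set ps)"
  then show "i < length ps \<and> ps!i = Max (set ps)" by simp
  fix j assume "j < length ps \<and> ps!j = Max (set ps)"
  then show "j = i" using nth_eq_iff_index_eq[of ps j i] \<open>distinct ps\<close> \<open>i < length ps\<close> \<open>ps!i = Max (set ps)\<close> by auto
qed

lemma li_eq: "distinct ps \<Longrightarrow> i < length ps \<Longrightarrow> ps!i = Min (set ps) \<Longrightarrow> lefti ps = i"
  unfolding lefti_def
proof (rule the_equality)
  assume "distinct ps" "i < length ps" "ps!i = Min (set ps)"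
  then show "i < length ps \<and> ps!i = Min (set ps)" by simp
  fix j assume "j < length ps \<and> ps!j = Min (set ps)"
  then show "j = i" using nth_eq_iff_index_eq[of ps j i] \<open>distinct ps\<close> \<open>i < length ps\<close> \<open>ps!i = Min (set ps)\<close> by auto
qed

theorem lemma7:
  fixes V :: "('a::linorder) set" and E :: "'a set set" and s t :: 'a and P :: "'a list"
  assumes "graph V E"
    and "x_property V E"
    and "s \<in> V" and "t \<in> V" and "s < t"
    and "dist_finite V E s t"
    and "shortest_path V E s t P"
  shows "(righti P < lefti P \<longleftrightarrow> path_has_crossing P)
    \<and> (path_has_crossing P \<longrightarrow>
         righti P = lefti P - 1 \<and>
         (\<forall>i j. i < righti P \<and> lefti P < j \<and> j < length P \<longrightarrow> P ! i < P ! j))"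
proof -
  interpret spath V E P using sp_spath assms(1,2,7) by blast
  interpret R: spath V E "rev P" using spath_rev sp_spath assms(1,2,7) by blast
  have w: "is_walk V E P" and hd: "hd P = s" and lst: "last P = t"
    using assms(7) unfolding shortest_path_def walk_between_def by auto
  have ne: "P \<noteq> []" using w unfolding is_walk_def by auto
  define N where "N = length P"
  have s0: "P!0 = s" using hd ne by (simp add: hd_conv_nth)
  have tN: "P!(N - 1) = t" using lst ne unfolding N_def by (simp add: last_conv_nth)
  have N2: "2 \<le> N"
  proof (rule ccontr)
    assume "\<not> 2 \<le> N" then have "N - 1 = 0" by auto
    then show False using s0 tN assms(5) by auto
  qed
  have fin: "finite (set P)" by simp
  have maxI: "Max (set P) = P!k" if "k < N" "\<forall>q<N. q \<noteq> k \<longrightarrow> P!q < P!k" for k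
  proof (rule Max_eqI)
    show "finite (set P)" by simp
    show "P!k \<in> set P" using that unfolding N_def by simp
    fix y assume "y \<in> set P"
    then obtain q where "q < N" "y = P!q" unfolding N_def by (auto simp: in_set_conv_nth)
    then show "y \<le> P!k" using that by (cases "q = k") auto
  qed
  have minI: "Min (set P) = P!k" if "k < N" "\<forall>q<N. q \<noteq> k \<longrightarrow> P!k < P!q" for k
  proof (rule Min_eqI)
    show "finite (set P)" by simp
    show "P!k \<in> set P" using that unfolding N_def by simp
    fix y assume "y \<in> set P"
    then obtain q where "q < N" "y = P!q" unfolding N_def by (auto simp: in_set_conv_nth)
    then show "P!k \<le> y" using that by (cases "q = k") auto
  qed
  have bwd: "righti P = Suc i \<and> lefti P = Suc (Suc i) \<and>
      (\<forall>j k. j \<le> i \<longrightarrow> Suc(Suc(Suc i)) \<le> k \<longrightarrow> k < length P \<longrightarrow> P!j < P!k)"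
    if il: "Suc (Suc (Suc i)) < N" and d: "dn i" for i
  proof -
    have D: "(\<forall>k<length P. k \<noteq> Suc i \<longrightarrow> P!k < P!Suc i)
      \<and> (\<forall>k<length P. k \<noteq> Suc(Suc i) \<longrightarrow> P!Suc(Suc i) < P!k)
      \<and> (\<forall>j k. j \<le> i \<longrightarrow> Suc(Suc(Suc i)) \<le> k \<longrightarrow> k < length P \<longrightarrow> P!j < P!k)"
      using down[OF il[unfolded N_def] d] .
    have "Max (set P) = P!Suc i" using maxI[of "Suc i"] D il unfolding N_def by auto
    then have "righti P = Suc i" using ri_eq[OF dst, of "Suc i"] il unfolding N_def by auto
    moreover have "Min (set P) = P!Suc (Suc i)" using minI[of "Suc (Suc i)"] D il unfolding N_def by auto
    then have "lefti P = Suc (Suc i)" using li_eq[OF dst, of "Suc (Suc i)"] il unfolding N_def by auto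
    ultimately show ?thesis using D by auto
  qed
  have noup: False if il: "Suc (Suc (Suc i)) < N" and u: "up i" for i
  proof -
    define i' where "i' = N - 4 - i"
    have lr: "length (rev P) = N" unfolding N_def by simp
    have il': "Suc (Suc (Suc i')) < length (rev P)" using il lr unfolding i'_def by auto
    have e1: "N - Suc i' = Suc (Suc (Suc i))" "N - Suc (Suc i') = Suc (Suc i)"
      "N - Suc (Suc (Suc i')) = Suc i" "N - Suc (Suc (Suc (Suc i'))) = i" using il unfolding i'_def by auto
    have "R.dn i'" unfolding R.dn_def using u il' lr e1 unfolding up_def
      by (simp add: rev_nth N_def[symmetric])
    then have "rev P ! 0 < rev P ! (N - 1)" using R.down[OF il'] lr il unfolding i'_def by auto
    then have "P!(N - 1) < P!0" using il by (simp add: rev_nth N_def[symmetric])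
    then show False using s0 tN assms(5) by auto
  qed
  have pc_imp: "\<exists>i. Suc (Suc (Suc i)) < N \<and> dn i" if pc: "path_has_crossing P"
  proof -
    obtain i j where ij: "Suc i < N" "Suc j < N" "cr i j"
      using pc unfolding path_has_crossing_def cr_def N_def by blast
    obtain i0 where i0: "Suc (Suc (Suc i0)) < N" "dn i0 \<or> up i0"
    proof (cases "i \<le> j")
      case True then show ?thesis using G[of i j] ij that unfolding N_def by auto
    next
      case False then have "cr j i" "j \<le> i" using ij cr_sym by auto
      then show ?thesis using G[of j i] ij that unfolding N_def by auto
    qed
    then show ?thesis using noup by blast
  qed
  have fwd: "path_has_crossing P" if rl: "righti P < lefti P"
  proof -
    obtain r where r: "r < N" "P!r = Max (set P)"
      using Max_in[OF fin] ne by (metis N_def in_set_conv_nth set_empty)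
    obtain l where l: "l < N" "P!l = Min (set P)"
      using Min_in[OF fin] ne by (metis N_def in_set_conv_nth set_empty)
    have rr: "righti P = r" using ri_eq[OF dst] r unfolding N_def by auto
    have ll: "lefti P = l" using li_eq[OF dst] l unfolding N_def by auto
    have rl': "r < l" using rl rr ll by auto
    have tM: "t < P!r"
    proof -
      have "t \<in> set P" using lst ne last_in_set by metis
      then have "t \<le> Max (set P)" using fin by simp
      moreover have "P!r \<noteq> t" using neq[of r "N - 1"] r l rl' tN unfolding N_def by auto
      ultimately show ?thesis using r by auto
    qed
    obtain k where k: "k < r" "(P!k < t) \<noteq> (P!Suc k < t)"
    proof -
      have "\<not> P!r < t" using tM by simp
      then show ?thesis using ivt_bool[of 0 r "\<lambda>q. P!q < t"] s0 assms(5) that by auto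
    qed
    have kt: "P!k \<noteq> t" "P!Suc k \<noteq> t"
      using neq[of k "N - 1"] neq[of "Suc k" "N - 1"] k r l rl' tN unfolding N_def by auto
    have ins_t: "inside k t" using k kt unfolding inside_def by (auto simp: min_def max_def)
    have "P!l \<le> P!k" "P!l \<le> P!Suc k" using l k r fin unfolding N_def by auto
    moreover have "P!l \<noteq> P!k" "P!l \<noteq> P!Suc k"
      using neq[of l k] neq[of l "Suc k"] k r l rl' unfolding N_def by auto
    ultimately have ins_m: "\<not> inside k (P!l)" unfolding inside_def by (auto simp: min_def)
    have "\<exists>m. l \<le> m \<and> m < N - 1 \<and> cr m k"
    proof (rule sep)
      show "Suc k < length P" using k r unfolding N_def by auto
      show "l \<le> N - 1" "N - 1 < length P" using l N2 unfolding N_def by auto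
      show "\<forall>q. l \<le> q \<and> q \<le> N - 1 \<longrightarrow> q \<noteq> k \<and> q \<noteq> Suc k" using k rl' by auto
      show "inside k (P!l) \<noteq> inside k (P!(N - 1))" using ins_t ins_m tN by auto
    qed
    then obtain m where "m < N - 1" "cr m k" by blast
    then show ?thesis unfolding path_has_crossing_def cr_def using k r N2 unfolding N_def
      by (intro exI[of _ m] exI[of _ k]) auto
  qed
  have main: "path_has_crossing P \<Longrightarrow> righti P < lefti P \<and> righti P = lefti P - 1 \<and>
         (\<forall>i j. i < righti P \<and> lefti P < j \<and> j < length P \<longrightarrow> P ! i < P ! j)"
  proof -
    assume pc: "path_has_crossing P"
    then obtain i where "Suc (Suc (Suc i)) < N" "dn i" using pc_imp by blast
    then have b: "righti P = Suc i \<and> lefti P = Suc (Suc i) \<and>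
      (\<forall>j k. j \<le> i \<longrightarrow> Suc(Suc(Suc i)) \<le> k \<longrightarrow> k < length P \<longrightarrow> P!j < P!k)" using bwd by blast
    then show ?thesis by auto
  qed
  show ?thesis using main fwd by blast
qed


end
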